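(* For the public-key scheme $\mathsf{LWE\text{-}PKE}(n,q,\chi)$, there is a quantum algorithm that makes one quantum query to the decryption function $\mathsf{Dec}_{\mathbf{sk}}$ and recovers the entire secret key $\mathbf{sk}$ with probability at least $4/\pi^2-o(1)$.
   Context: $\mathsf{LWE\text{-}PKE}(n,q,\chi)$, for integers $m\ge n\ge1$, $q\ge2$ and a discrete error distribution $\chi$ on $\mathbb Z_q$: $\mathsf{KeyGen}$ outputs secret key $\mathbf{sk}=\mathbf k$ uniform in $\mathbb Z_q^n$ and public key $(\mathbf A,\mathbf A\mathbf k+\mathbf e)$ with $\mathbf A$ uniform in $\mathbb Z_q^{m\times n}$ and $\mathbf e\leftarrow\chi^m$; to encrypt $b\in\{0,1\}$, pick random $\mathbf v\in\{0,1\}^m$ of Hamming weight about $m/2$ and output $(\mathbf v^{\mathsf T}\mathbf A,\mathbf v^{\mathsf T}(\mathbf A\mathbf k+\mathbf e)+b\lfloor q/2\rfloor)\in\mathbb Z_q^{n+1}$; $\mathsf{Dec}_{\mathbf{sk}}(\mathbf a,c)$ outputs $0$ if $|c-\langle\mathbf a,\mathbf{sk}\rangle|\le\lfloor q/4\rfloor$ and $1$ otherwise (arithmetic mod $q$, $|\cdot|$ the absolute value of the representative of least absolute value). A quantum query to $\mathsf{Dec}_{\mathbf{sk}}$ means one application of $|\mathbf a,c\rangle|y\rangle\mapsto|\mathbf a,c\rangle|y\oplus\mathsf{Dec}_{\mathbf{sk}}(\mathbf a,c)\rangle$ on arbitrary superpositions of $(\mathbf a,c)\in\mathbb Z_q^{n+1}$.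 *)

theory Defs
  imports "HOL-Analysis.Analysis"
begin

text \<open>Elements of Z_q are represented by naturals in {0..<q}; vectors in Z_q^n by
  nat lists of length n with entries in {0..<q}.\<close>

definition zq_vecs :: "nat \<Rightarrow> nat \<Rightarrow> nat list set" where
  "zq_vecs n q = {v. length v = n \<and> (\<forall>x\<in>set v. x < q)}"

definition inner_zq :: "nat \<Rightarrow> nat list \<Rightarrow> nat list \<Rightarrow> int" where
  "inner_zq q a k = (int (\<Sum>i<length a. a ! i * k ! i)) mod int q"

definition abs_zq :: "nat \<Rightarrow> int \<Rightarrow> int" where
  "abs_zq q x = min (x mod int q) (int q - x mod int q)"

text \<open>Decryption; True encodes output bit 1, False encodes 0.\<close>
definition lwe_dec :: "nat \<Rightarrow> nat list \<Rightarrow> nat list \<Rightarrow> nat \<Rightarrow> bool" where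
  "lwe_dec q sk a c = (\<not> (abs_zq q (int c - inner_zq q a sk) \<le> int (q div 4)))"

text \<open>Computational basis of the quantum memory: query register (a,c) in Z_q^(n+1),
  answer qubit y, and a workspace register with w basis states.\<close>
type_synonym qbasis = "nat list \<times> nat \<times> bool \<times> nat"

definition qbasis_set :: "nat \<Rightarrow> nat \<Rightarrow> nat \<Rightarrow> qbasis set" where
  "qbasis_set n q w = {(a, c, y, j). a \<in> zq_vecs n q \<and> c < q \<and> j < w}"

type_synonym qstate = "qbasis \<Rightarrow> complex"
type_synonym qop = "qbasis \<Rightarrow> qbasis \<Rightarrow> complex"

definition unitary_on :: "qbasis set \<Rightarrow> qop \<Rightarrow> bool" where
  "unitary_on S U \<longleftrightarrow>
     (\<forall>x\<in>S. \<forall>y\<in>S. (\<Sum>z\<in>S. cnj (U z x) * U z y) = (if x = y then 1 else 0))"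

definition apply_op :: "qbasis set \<Rightarrow> qop \<Rightarrow> qstate \<Rightarrow> qstate" where
  "apply_op S U \<psi> = (\<lambda>x. \<Sum>y\<in>S. U x y * \<psi> y)"

definition dec_oracle :: "nat \<Rightarrow> nat list \<Rightarrow> qstate \<Rightarrow> qstate" where
  "dec_oracle q sk \<psi> = (\<lambda>(a, c, y, j). \<psi> (a, c, y \<noteq> lwe_dec q sk a c, j))"

definition init_state :: "nat \<Rightarrow> qstate" where
  "init_state n = (\<lambda>x. if x = (replicate n 0, 0, False, 0) then 1 else 0)"

text \<open>Success probability of the one-query algorithm (U0, query, U1, measure in the
  computational basis, classical post-processing out) in outputting sk.\<close>
definition one_query_success ::
  "nat \<Rightarrow> nat \<Rightarrow> nat \<Rightarrow> qop \<Rightarrow> qop \<Rightarrow> (qbasis \<Rightarrow> nat list) \<Rightarrow> nat list \<Rightarrow> real" where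
  "one_query_success n q w U0 U1 out sk =
     (let S = qbasis_set n q w;
          \<phi> = apply_op S U1 (dec_oracle q sk (apply_op S U0 (init_state n)))
      in \<Sum>x\<in>{x\<in>S. out x = sk}. (cmod (\<phi> x))\<^sup>2)"

end

theory Submission
  imports Defs "HOL-Real_Asymp.Real_Asymp"
begin


definition ee :: "nat \<Rightarrow> int \<Rightarrow> complex" where
  "ee q t = cis (2 * pi * of_int t / of_nat q)"

lemma ee_add: "ee q (s + t) = ee q s * ee q t"
  by (simp add: ee_def cis_mult add_divide_distrib distrib_left)

lemma ee_0[simp]: "ee q 0 = 1" by (simp add: ee_def)

lemma ee_cnj: "cnj (ee q t) = ee q (- t)"
  unfolding ee_def cis_cnj by simp

lemma ee_norm[simp]: "cmod (ee q t) = 1" by (simp add: ee_def)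

lemma ee_mult_q: "q > 0 \<Longrightarrow> ee q (int q * k) = 1"
proof -
  assume "q > 0"
  then have "2 * pi * of_int (int q * k) / of_nat q = 2 * pi * of_int k" by simp
  then show ?thesis unfolding ee_def by (simp add: cis_multiple_2pi)
qed

lemma ee_mod: "q > 0 \<Longrightarrow> ee q (t mod int q) = ee q t"
proof -
  assume q: "q > 0"
  have "t = t mod int q + int q * (t div int q)" by simp
  then have "ee q t = ee q (t mod int q) * ee q (int q * (t div int q))"
    by (metis ee_add)
  with q show ?thesis by (simp add: ee_mult_q)
qed

lemma ee_pow: "ee q t ^ k = ee q (int k * t)"
proof -
  have "real k * (2 * pi * of_int t / of_nat q) = 2 * pi * of_int (int k * t) / of_nat q" by simp
  then show ?thesis unfolding ee_def using Complex.DeMoivre[of "2 * pi * of_int t / of_nat q" k] by metis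
qed

lemma ee_eq_1: "q > 0 \<Longrightarrow> ee q d = 1 \<Longrightarrow> int q dvd d"
proof -
  assume q: "q > 0" and e: "ee q d = 1"
  then have "cos (2 * pi * of_int d / of_nat q) = 1"
    unfolding ee_def by (metis Re_complex_of_real cis.sel(1) one_complex.sel(1))
  then obtain x :: int where "2 * pi * of_int d / of_nat q = of_int x * 2 * pi"
    by (auto simp: cos_one_2pi_int)
  then have "of_int d = of_int x * (of_nat q :: real)" using q
    by (simp add: field_simps)
  then have "d = x * int q" by (metis of_int_eq_iff of_int_mult of_int_of_nat_eq)
  then show ?thesis by simp
qed

lemma ee_geo: "q > 0 \<Longrightarrow> (\<Sum>v<q. ee q (int v * d)) = (if int q dvd d then of_nat q else 0)"
proof -
  assume q: "q > 0"
  have "(\<Sum>v<q. ee q (int v * d)) = (\<Sum>v<q. (ee q d) ^ v)" by (simp add: ee_pow)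
  also have "\<dots> = (if ee q d = 1 then of_nat q else (1 - ee q d ^ q) / (1 - ee q d))"
    by (rule sum_gp_strict)
  also have "\<dots> = (if int q dvd d then of_nat q else 0)"
  proof (cases "int q dvd d")
    case True
    then obtain k where "d = int q * k" by auto
    then show ?thesis using q by (simp add: ee_mult_q)
  next
    case False
    then have "ee q d \<noteq> 1" using ee_eq_1 q by blast
    moreover have "ee q d ^ q = 1" using q by (simp add: ee_pow ee_mult_q)
    ultimately show ?thesis using False by simp
  qed
  finally show ?thesis .
qed



definition ip :: "nat list \<Rightarrow> nat list \<Rightarrow> nat" where
  "ip a u = (\<Sum>i<length a. a ! i * u ! i)"

lemma ip_Cons: "ip (y # a) (x # u) = y * x + ip a u"
  unfolding ip_def by (simp only: length_Cons sum.lessThan_Suc_shift nth_Cons_0 nth_Cons_Suc)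

lemma ip_Nil[simp]: "ip [] u = 0" unfolding ip_def by simp

lemma ip_zero: "ip a (replicate (length a) 0) = 0"
  unfolding ip_def by simp

lemma zq_vecs_0: "zq_vecs 0 q = {[]}"
  unfolding zq_vecs_def by auto

lemma zq_vecs_Suc: "zq_vecs (Suc n) q = (\<lambda>(x, xs). x # xs) ` ({..<q} \<times> zq_vecs n q)"
  unfolding zq_vecs_def by (auto simp: length_Suc_conv)

lemma zq_vecs_alt: "zq_vecs n q = {xs. set xs \<subseteq> {..<q} \<and> length xs = n}"
  unfolding zq_vecs_def by auto

lemma finite_zq_vecs[simp]: "finite (zq_vecs n q)"
  unfolding zq_vecs_alt by (rule finite_lists_length_eq) simp

lemma card_zq_vecs: "card (zq_vecs n q) = q ^ n"
  unfolding zq_vecs_alt by (subst card_lists_length_eq) simp_all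

lemma sum_zq_vecs_Suc:
  "(\<Sum>u\<in>zq_vecs (Suc n) q. f u) = (\<Sum>x<q. \<Sum>u\<in>zq_vecs n q. f (x # u))"
proof -
  have inj: "inj_on (\<lambda>(x, xs). x # xs) ({..<q} \<times> zq_vecs n q)"
    by (auto simp: inj_on_def)
  have "(\<Sum>u\<in>zq_vecs (Suc n) q. f u) = (\<Sum>p\<in>{..<q} \<times> zq_vecs n q. f ((\<lambda>(x, xs). x # xs) p))"
    unfolding zq_vecs_Suc by (rule sum.reindex[OF inj, unfolded comp_def])
  also have "\<dots> = (\<Sum>x<q. \<Sum>u\<in>zq_vecs n q. f (x # u))"
    by (simp add: sum.cartesian_product split_def)
  finally show ?thesis .
qed

lemma div_sq:
  fixes x y z w :: complex
  assumes "q > 0"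
  shows "cnj (x / of_real (sqrt (real q)) * y) * (z / of_real (sqrt (real q)) * w) = cnj x * z / of_nat q * (cnj y * w)"
proof -
  have S: "(of_real (sqrt (real q)) :: complex) ^ 2 = of_nat q"
    by (metis of_real_of_nat_eq of_real_power of_nat_0_le_iff real_sqrt_pow2)
  have "cnj (x / of_real (sqrt (real q)) * y) * (z / of_real (sqrt (real q)) * w) = cnj x * z * (cnj y * w) / (of_real (sqrt (real q))) ^ 2"
    by (simp add: power2_eq_square)
  also have "\<dots> = cnj x * z / of_nat q * (cnj y * w)" by (simp add: S)
  finally show ?thesis .
qed

definition Amat :: "nat \<Rightarrow> nat \<Rightarrow> nat list \<Rightarrow> nat list \<Rightarrow> complex" where
  "Amat n q u a = ee q (- int (ip a u)) / complex_of_real (sqrt (real q) ^ n)"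

definition Cmat :: "nat \<Rightarrow> nat \<Rightarrow> nat \<Rightarrow> complex" where
  "Cmat q v c = ee q (int v * int c) / complex_of_real (sqrt (real q))"

lemma scalar_orth:
  assumes q: "q > 0" and a: "a < q" and b: "b < q" and that: "s = 1 \<or> s = -1"
  shows "(\<Sum>x<q. cnj (ee q (s * int x * int a)) * ee q (s * int x * int b)) = (if a = b then of_nat q else 0)"
proof -
  have "(\<Sum>x<q. cnj (ee q (s * int x * int a)) * ee q (s * int x * int b)) = (\<Sum>x<q. ee q (int x * (s * (int b - int a))))"
    by (simp add: ee_cnj ee_add[symmetric] algebra_simps)
  also have "\<dots> = (if int q dvd (s * (int b - int a)) then of_nat q else 0)"
    using q by (rule ee_geo)
  also have "(int q dvd (s * (int b - int a))) = (a = b)"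
  proof
    assume "int q dvd s * (int b - int a)"
    then have "int q dvd (int b - int a)" using that
      by (metis dvd_minus_iff minus_diff_eq mult_1 mult_minus1)
    then obtain k where k: "int b - int a = int q * k" by auto
    have "k = 0"
    proof (rule ccontr)
      assume "k \<noteq> 0"
      then have "\<bar>k\<bar> \<ge> 1" by simp
      then have "\<bar>int q * k\<bar> \<ge> int q" using mult_left_mono[of 1 "\<bar>k\<bar>" "int q"] by (simp add: abs_mult)
      with k a b show False by linarith
    qed
    with k show "a = b" by simp
  qed simp
  finally show ?thesis .
qed

lemma Amat_Cons: "Amat (Suc n) q (x # u) (y # a) = (ee q (- (int x * int y)) / complex_of_real (sqrt (real q))) * Amat n q u a"
  unfolding Amat_def ip_Cons by (simp add: ee_add[symmetric] algebra_simps)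

lemma Amat_orth:
  assumes q: "q > 0"
  shows "a \<in> zq_vecs n q \<Longrightarrow> b \<in> zq_vecs n q \<Longrightarrow>
    (\<Sum>u\<in>zq_vecs n q. cnj (Amat n q u a) * Amat n q u b) = (if a = b then 1 else 0)"
proof (induction n arbitrary: a b)
  case 0
  then show ?case by (simp add: zq_vecs_0 Amat_def)
next
  case (Suc n)
  from Suc.prems obtain a0 a' where a: "a = a0 # a'" "a0 < q" "a' \<in> zq_vecs n q"
    unfolding zq_vecs_Suc by auto
  from Suc.prems obtain b0 b' where b: "b = b0 # b'" "b0 < q" "b' \<in> zq_vecs n q"
    unfolding zq_vecs_Suc by auto
  have "(\<Sum>u\<in>zq_vecs (Suc n) q. cnj (Amat (Suc n) q u a) * Amat (Suc n) q u b)
     = (\<Sum>x<q. \<Sum>u\<in>zq_vecs n q. (cnj (ee q (- (int x * int a0))) * ee q (- (int x * int b0)) / of_nat q)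
          * (cnj (Amat n q u a') * Amat n q u b'))"
    unfolding sum_zq_vecs_Suc a b Amat_Cons
    by (intro sum.cong refl) (rule div_sq[OF q])
  also have "\<dots> = (\<Sum>x<q. cnj (ee q (- (int x * int a0))) * ee q (- (int x * int b0)) / of_nat q)
          * (\<Sum>u\<in>zq_vecs n q. cnj (Amat n q u a') * Amat n q u b')"
    by (simp add: sum_product)
  also have "\<dots> = (if a = b then 1 else 0)"
    using scalar_orth[OF q a(2) b(2), of "-1"] Suc.IH[OF a(3) b(3)] q a b
    by (simp add: sum_divide_distrib[symmetric])
  finally show ?case .
qed

lemma Cmat_orth:
  assumes q: "q > 0" and "a < q" "b < q"
  shows "(\<Sum>v<q. cnj (Cmat q v a) * Cmat q v b) = (if a = b then 1 else 0)"
proof -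
  have "(\<Sum>v<q. cnj (Cmat q v a) * Cmat q v b) = (\<Sum>v<q. cnj (ee q (1 * int v * int a)) * ee q (1 * int v * int b)) / of_nat q"
    unfolding Cmat_def sum_divide_distrib by (intro sum.cong refl) (simp add: div_sq[OF q, where y=1 and w=1, simplified])
  then show ?thesis using scalar_orth[OF assms, of 1] q by simp
qed



lemma qbasis_set_prod: "qbasis_set n q w = zq_vecs n q \<times> {..<q} \<times> UNIV \<times> {..<w}"
  unfolding qbasis_set_def by auto

lemma sum_qbasis:
  "(\<Sum>z\<in>qbasis_set n q w. f z) = (\<Sum>a\<in>zq_vecs n q. \<Sum>c<q. \<Sum>y\<in>UNIV. \<Sum>j<w. f (a, c, y, j))"
  unfolding qbasis_set_prod by (simp add: sum.cartesian_product)

lemma tensor_unitary: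
  fixes A :: "nat list \<Rightarrow> nat list \<Rightarrow> complex" and C :: "nat \<Rightarrow> nat \<Rightarrow> complex"
    and H :: "bool \<Rightarrow> bool \<Rightarrow> complex" and D :: "nat \<Rightarrow> nat \<Rightarrow> complex"
  assumes hA: "\<And>a b. a \<in> zq_vecs n q \<Longrightarrow> b \<in> zq_vecs n q \<Longrightarrow> (\<Sum>u\<in>zq_vecs n q. cnj (A u a) * A u b) = (if a = b then 1 else 0)"
    and hC: "\<And>a b. a < q \<Longrightarrow> b < q \<Longrightarrow> (\<Sum>u<q. cnj (C u a) * C u b) = (if a = b then 1 else 0)"
    and hH: "\<And>a b. (\<Sum>u\<in>UNIV. cnj (H u a) * H u b) = (if a = b then 1 else 0)"
    and hD: "\<And>a b. a < w \<Longrightarrow> b < w \<Longrightarrow> (\<Sum>u<w. cnj (D u a) * D u b) = (if a = b then 1 else 0)"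
  shows "unitary_on (qbasis_set n q w) (\<lambda>(u, v, y, j) (a, c, y', j'). A u a * C v c * H y y' * D j j')"
  unfolding unitary_on_def
proof (intro ballI)
  fix x z assume x: "x \<in> qbasis_set n q w" and z: "z \<in> qbasis_set n q w"
  obtain a1 c1 y1 j1 where x': "x = (a1, c1, y1, j1)" by (cases x) auto
  obtain a2 c2 y2 j2 where z': "z = (a2, c2, y2, j2)" by (cases z) auto
  have m: "a1 \<in> zq_vecs n q" "c1 < q" "j1 < w" "a2 \<in> zq_vecs n q" "c2 < q" "j2 < w"
    using x z unfolding x' z' qbasis_set_def by auto
  have "(\<Sum>t\<in>qbasis_set n q w. cnj ((\<lambda>(u, v, y, j) (a, c, y', j'). A u a * C v c * H y y' * D j j') t x) *
            (\<lambda>(u, v, y, j) (a, c, y', j'). A u a * C v c * H y y' * D j j') t z)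
     = (\<Sum>u\<in>zq_vecs n q. \<Sum>v<q. \<Sum>y\<in>UNIV. \<Sum>j<w.
          (cnj (A u a1) * A u a2) * ((cnj (C v c1) * C v c2) * ((cnj (H y y1) * H y y2) * (cnj (D j j1) * D j j2))))"
    unfolding sum_qbasis x' z' by (simp add: algebra_simps)
  also have "\<dots> = (\<Sum>u\<in>zq_vecs n q. cnj (A u a1) * A u a2) * ((\<Sum>v<q. cnj (C v c1) * C v c2) *
        ((\<Sum>y\<in>UNIV. cnj (H y y1) * H y y2) * (\<Sum>j<w. cnj (D j j1) * D j j2)))"
    by (simp only: sum_distrib_left[symmetric] sum_distrib_right[symmetric])
  also have "\<dots> = (if x = z then 1 else 0)"
    using hA[OF m(1) m(4)] hC[OF m(2) m(5)] hH[of y1 y2] hD[OF m(3) m(6)] unfolding x' z' by simp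
  finally show "(\<Sum>t\<in>qbasis_set n q w. cnj ((\<lambda>(u, v, y, j) (a, c, y', j'). A u a * C v c * H y y' * D j j') t x) *
            (\<lambda>(u, v, y, j) (a, c, y', j'). A u a * C v c * H y y' * D j j') t z) = (if x = z then 1 else 0)" .
qed

definition Hmat :: "bool \<Rightarrow> bool \<Rightarrow> complex" where
  "Hmat y y' = complex_of_real ((if y \<and> \<not> y' then -1 else 1) / sqrt 2)"

definition Imat :: "'a \<Rightarrow> 'a \<Rightarrow> complex" where
  "Imat x y = (if x = y then 1 else 0)"

lemma Hmat_orth: "(\<Sum>u\<in>UNIV. cnj (Hmat u a) * Hmat u b) = (if a = b then 1 else 0)"
proof -
  have S: "(1 / sqrt 2) * (1 / sqrt 2) = (1/2::real)"
    by (simp add: divide_simps)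
  have S2: "(-1 / sqrt 2) * (-1 / sqrt 2) = (1/2::real)"
    by (simp add: divide_simps)
  have S3: "(-1 / sqrt 2) * (1 / sqrt 2) = (-1/2::real)"
    by (simp add: divide_simps)
  have S4: "(1 / sqrt 2) * (-1 / sqrt 2) = (-1/2::real)"
    by (simp add: divide_simps)
  have "(\<Sum>u\<in>UNIV. cnj (Hmat u a) * Hmat u b) = Hmat False a * Hmat False b + Hmat True a * Hmat True b"
    unfolding UNIV_bool Hmat_def by simp
  also have "\<dots> = (if a = b then 1 else 0)"
    unfolding Hmat_def of_real_mult[symmetric] of_real_add[symmetric]
    by (cases a; cases b) (simp_all only: if_True if_False simp_thms S S2 S3 S4, simp_all)
  finally show ?thesis .
qed

lemma Imat_orth_nat: "a < w \<Longrightarrow> b < w \<Longrightarrow> (\<Sum>u<w. cnj (Imat u a) * Imat u (b::nat)) = (if a = b then 1 else 0)"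
  unfolding Imat_def by (simp add: if_distrib[of cnj] if_distrib[of "(*) _"] sum.delta cong: if_cong)

lemma Imat_orth_bool: "(\<Sum>u\<in>UNIV. cnj (Imat u a) * Imat u (b::bool)) = (if a = b then 1 else 0)"
  unfolding Imat_def by (cases a; cases b) (simp_all add: UNIV_bool)

definition U0m :: "nat \<Rightarrow> nat \<Rightarrow> qop" where
  "U0m n q = (\<lambda>(u, v, y, j) (a, c, y', j'). Amat n q u a * Cmat q v c * Hmat y y' * Imat j j')"

definition U1m :: "nat \<Rightarrow> nat \<Rightarrow> qop" where
  "U1m n q = (\<lambda>(u, v, y, j) (a, c, y', j'). Amat n q u a * Cmat q v c * Imat y y' * Imat j j')"

lemma U0_unitary: "q > 0 \<Longrightarrow> unitary_on (qbasis_set n q w) (U0m n q)"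
  unfolding U0m_def
  by (rule tensor_unitary, (rule Amat_orth; assumption), (rule Cmat_orth; assumption), rule Hmat_orth, (rule Imat_orth_nat; assumption))

lemma U1_unitary: "q > 0 \<Longrightarrow> unitary_on (qbasis_set n q w) (U1m n q)"
  unfolding U1m_def
  by (rule tensor_unitary, (rule Amat_orth; assumption), (rule Cmat_orth; assumption), rule Imat_orth_bool, (rule Imat_orth_nat; assumption))



definition Gf :: "nat \<Rightarrow> int \<Rightarrow> complex" where
  "Gf q t = ee q t * (if abs_zq q t \<le> int (q div 4) then 1 else -1)"

definition Phi :: "nat \<Rightarrow> complex" where
  "Phi q = (\<Sum>c<q. Gf q (int c))"

lemma abs_zq_mod: "abs_zq q (t mod int q) = abs_zq q t"
  unfolding abs_zq_def by simp

lemma Gf_mod: "q > 0 \<Longrightarrow> Gf q (t mod int q) = Gf q t"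
  unfolding Gf_def by (simp add: ee_mod abs_zq_mod)

lemma sum_shift:
  assumes q: "q > 0" and per: "\<And>t. g (t mod int q) = g t"
  shows "(\<Sum>c<q. g (int c - r)) = (\<Sum>c<q. g (int c))"
proof (rule sum.reindex_bij_witness[where j = "\<lambda>c. nat ((int c - r) mod int q)" and i = "\<lambda>b. nat ((int b + r) mod int q)"])
  fix a assume a: "a \<in> {..<q}"
  have "((int a - r) mod int q + r) mod int q = int a"
    using a by (simp add: mod_add_left_eq)
  then show "nat ((int (nat ((int a - r) mod int q)) + r) mod int q) = a"
    using q by simp
  show "nat ((int a - r) mod int q) \<in> {..<q}" using q by (simp add: nat_less_iff)
  show "g (int (nat ((int a - r) mod int q))) = g (int a - r)"
    using q per by simp
next
  fix b assume b: "b \<in> {..<q}"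
  have "((int b + r) mod int q - r) mod int q = int b"
    using b by (simp add: mod_diff_left_eq)
  then show "nat ((int (nat ((int b + r) mod int q)) - r) mod int q) = b"
    using q by simp
  show "nat ((int b + r) mod int q) \<in> {..<q}" using q by (simp add: nat_less_iff)
qed

lemma ip_replicate0: "ip (replicate n 0) a = 0" unfolding ip_def by simp


lemma psi0:
  assumes q: "q > 0"
  shows "apply_op (qbasis_set n q 1) (U0m n q) (init_state n) =
    (\<lambda>(a, c, y, j). Hmat y False * Imat j (0::nat) / (of_real (sqrt (real q) ^ n) * of_real (sqrt (real q))))"
proof (rule ext)
  fix x :: qbasis
  obtain a c y j where x: "x = (a, c, y, j)" by (cases x) auto
  let ?e = "(replicate n 0, 0, False, 0) :: qbasis"
  have e: "?e \<in> qbasis_set n q 1" using q unfolding qbasis_set_def zq_vecs_def by auto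
  have "apply_op (qbasis_set n q 1) (U0m n q) (init_state n) x = (\<Sum>z\<in>qbasis_set n q 1. if ?e = z then U0m n q x ?e else 0)"
    unfolding apply_op_def init_state_def by (intro sum.cong refl) auto
  also have "\<dots> = U0m n q x ?e" by (subst sum.delta', simp add: qbasis_set_prod, rule if_P[OF e])
  also have "\<dots> = Hmat y False * Imat j (0::nat) / (of_real (sqrt (real q) ^ n) * of_real (sqrt (real q)))"
    unfolding x U0m_def Amat_def Cmat_def by (simp add: ip_replicate0)
  finally show "apply_op (qbasis_set n q 1) (U0m n q) (init_state n) x =
    (\<lambda>(a, c, y, j). Hmat y False * Imat j (0::nat) / (of_real (sqrt (real q) ^ n) * of_real (sqrt (real q)))) x"
    unfolding x by simp
qed

lemma Hmat_xor: "Hmat (y \<noteq> d) False = Hmat y False * (if d then -1 else 1)"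
  unfolding Hmat_def by (cases y; cases d) simp_all

lemma inner_ip: "inner_zq q a sk = int (ip a sk) mod int q"
  unfolding inner_zq_def ip_def by simp

lemma sign_Gf:
  assumes q: "q > 0"
  shows "ee q (int c - int (ip a sk)) * (if lwe_dec q sk a c then -1 else 1) = Gf q (int c - int (ip a sk))"
proof -
  have "abs_zq q (int c - inner_zq q a sk) = abs_zq q (int c - int (ip a sk))"
    unfolding inner_ip by (metis abs_zq_mod mod_diff_right_eq)
  then show ?thesis unfolding Gf_def lwe_dec_def by simp
qed

lemma sqrt_denom:
  "(of_real (sqrt (real q) ^ n) * of_real (sqrt (real q)) :: complex) * (of_real (sqrt (real q) ^ n) * of_real (sqrt (real q)))
    = of_nat q ^ n * of_nat q"
proof -
  have "(sqrt (real q) ^ n * sqrt (real q)) * (sqrt (real q) ^ n * sqrt (real q)) = real q ^ n * real q"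
    by (simp add: power_mult_distrib[symmetric] algebra_simps)
  then show ?thesis by (metis of_real_mult of_real_of_nat_eq of_real_power)
qed

lemma amp:
  assumes q: "q > 0" and sk: "sk \<in> zq_vecs n q"
  shows "apply_op (qbasis_set n q 1) (U1m n q) (dec_oracle q sk (apply_op (qbasis_set n q 1) (U0m n q) (init_state n))) (sk, 1, y, 0)
    = Hmat y False * Phi q / of_nat q"
proof -
  let ?R = "(of_real (sqrt (real q) ^ n) * of_real (sqrt (real q)) :: complex)"
  have R0: "?R \<noteq> 0" using q by simp
  have "apply_op (qbasis_set n q 1) (U1m n q) (dec_oracle q sk (apply_op (qbasis_set n q 1) (U0m n q) (init_state n))) (sk, 1, y, 0)
    = (\<Sum>a\<in>zq_vecs n q. \<Sum>c<q. \<Sum>y'\<in>UNIV. \<Sum>j<1.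
         Amat n q sk a * Cmat q 1 c * Imat y y' * Imat 0 j * (Hmat (y' \<noteq> lwe_dec q sk a c) False * Imat j (0::nat) / ?R))"
    unfolding apply_op_def[of _ "U1m n q"] psi0[OF q] unfolding sum_qbasis dec_oracle_def U1m_def by simp
  also have "\<dots> = (\<Sum>a\<in>zq_vecs n q. \<Sum>c<q. Amat n q sk a * Cmat q 1 c * (Hmat (y \<noteq> lwe_dec q sk a c) False / ?R))"
    unfolding Imat_def by (simp add: UNIV_bool)
  also have "\<dots> = (\<Sum>a\<in>zq_vecs n q. \<Sum>c<q. Hmat y False * Gf q (int c - int (ip a sk)) / (?R * ?R))"
  proof (intro sum.cong refl)
    fix a c
    have "Amat n q sk a * Cmat q 1 c = ee q (int c - int (ip a sk)) / ?R"
      unfolding Amat_def Cmat_def by (simp add: ee_add[symmetric])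
    then show "Amat n q sk a * Cmat q 1 c * (Hmat (y \<noteq> lwe_dec q sk a c) False / ?R) = Hmat y False * Gf q (int c - int (ip a sk)) / (?R * ?R)"
      unfolding Hmat_xor sign_Gf[OF q, symmetric] by simp
  qed
  also have "\<dots> = (\<Sum>a\<in>zq_vecs n q. Hmat y False * Phi q / (?R * ?R))"
  proof (intro sum.cong refl)
    fix a
    have "(\<Sum>c<q. Gf q (int c - int (ip a sk))) = Phi q"
      unfolding Phi_def by (rule sum_shift[where g="Gf q", OF q Gf_mod[OF q]])
    then show "(\<Sum>c<q. Hmat y False * Gf q (int c - int (ip a sk)) / (?R * ?R)) = Hmat y False * Phi q / (?R * ?R)"
      by (simp add: sum_distrib_left[symmetric] sum_divide_distrib[symmetric])
  qed
  also have "\<dots> = of_nat (q ^ n) * (Hmat y False * Phi q / (of_nat q ^ n * of_nat q))"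
    unfolding sqrt_denom by (simp add: card_zq_vecs)
  also have "\<dots> = Hmat y False * Phi q / of_nat q"
    using q by (simp add: field_simps)
  finally show ?thesis .
qed



lemma cmod_1_minus_cis: "cmod (1 - cis t) = 2 * \<bar>sin (t / 2)\<bar>"
proof -
  have c: "cos t = 1 - 2 * (sin (t / 2))\<^sup>2"
    using cos_double_sin[of "t / 2"] by simp
  have "(cmod (1 - cis t))\<^sup>2 = (1 - cos t)\<^sup>2 + (sin t)\<^sup>2"
    by (simp add: cmod_power2)
  also have "\<dots> = 2 - 2 * cos t"
    using sin_cos_squared_add[of t] by (simp add: power2_eq_square algebra_simps)
  also have "\<dots> = (2 * \<bar>sin (t / 2)\<bar>)\<^sup>2"
    unfolding c by (simp add: power2_eq_square)
  finally show ?thesis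
    by (metis abs_of_nonneg norm_ge_zero power2_eq_iff_nonneg abs_ge_zero mult_nonneg_nonneg zero_le_numeral)
qed

lemma T_char:
  fixes q c :: nat
  assumes "c < q"
  shows "(abs_zq q (int c) \<le> int (q div 4)) = (c \<le> q div 4 \<or> q - c \<le> q div 4)"
  using assms unfolding abs_zq_def by auto


lemma mod_2q: "(q::nat) \<le> x \<Longrightarrow> x < 2 * q \<Longrightarrow> x mod q = x - q"
  by (simp add: le_mod_geq)

lemma sumT:
  fixes q :: nat
  assumes q: "q \<ge> 2"
  defines "m \<equiv> q div 4"
  shows "(\<Sum>c\<in>{c. c < q \<and> (c \<le> m \<or> q - c \<le> m)}. ee q (int c)) = (\<Sum>j<2 * m + 1. ee q (int j - int m))"
proof (rule sym, rule sum.reindex_bij_witness[where j = "\<lambda>a. (a + q - m) mod q" and i = "\<lambda>b. (b + m) mod q"])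
  have m: "2 * m + 1 \<le> q" "m < q" using q unfolding m_def by linarith+
  fix a assume a: "a \<in> {..<2 * m + 1}"
  show "((a + q - m) mod q + m) mod q = a"
  proof (cases "a < m")
    case True
    then show ?thesis using a m by (simp add: mod_less)
  next
    case False
    then have "(a + q - m) mod q = a - m" using a m mod_2q[of q "a + q - m"] by simp
    then show ?thesis using False a m by simp
  qed
  show "(a + q - m) mod q \<in> {c. c < q \<and> (c \<le> m \<or> q - c \<le> m)}"
  proof (cases "a < m")
    case True
    then show ?thesis using a m by (simp add: mod_less)
  next
    case False
    then have "(a + q - m) mod q = a - m" using a m mod_2q[of q "a + q - m"] by simp
    then show ?thesis using False a m by simp arith
  qed
  have "ee q (int ((a + q - m) mod q)) = ee q (int (a + q - m))"
    using m by (simp add: of_nat_mod ee_mod)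
  also have "int (a + q - m) = (int a - int m) + int q * 1" using m by simp
  finally show "ee q (int ((a + q - m) mod q)) = ee q (int a - int m)"
    using m by (simp only: ee_add ee_mult_q) simp
next
  have m: "2 * m + 1 \<le> q" "m < q" using q unfolding m_def by linarith+
  fix b assume b: "b \<in> {c. c < q \<and> (c \<le> m \<or> q - c \<le> m)}"
  show "((b + m) mod q + q - m) mod q = b"
  proof (cases "b \<le> m")
    case True
    then show ?thesis using b m by (simp add: mod_less)
  next
    case False
    then have "q \<le> b + m" "b + m < 2 * q" using b m by auto
    then have "(b + m) mod q = b + m - q" by (rule mod_2q)
    moreover have "b + m - q + q - m = b" using False b m by auto
    ultimately show ?thesis using b by simp
  qed
  show "(b + m) mod q \<in> {..<2 * m + 1}"
  proof (cases "b \<le> m")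
    case True
    then show ?thesis using b m by (simp add: mod_less)
  next
    case False
    then have "q \<le> b + m" "b + m < 2 * q" using b m by auto
    then have "(b + m) mod q = b + m - q" by (rule mod_2q)
    moreover have "b + m - q < 2 * m + 1" using b by auto
    ultimately show ?thesis by simp
  qed
qed


lemma Phi_norm:
  fixes q :: nat
  assumes q: "q \<ge> 2"
  shows "cmod (Phi q) = 2 * \<bar>sin (pi * real (2 * (q div 4) + 1) / real q)\<bar> / sin (pi / real q)"
proof -
  define m where "m = q div 4"
  define N where "N = 2 * m + 1"
  define z where "z = ee q 1"
  have q0: "q > 0" using q by simp
  have ndvd: "\<not> int q dvd 1" using q by auto
  have "Phi q = (\<Sum>c<q. 2 * (if c \<le> m \<or> q - c \<le> m then ee q (int c) else 0) - ee q (int c))"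
    unfolding Phi_def Gf_def m_def by (intro sum.cong refl) (simp add: T_char)
  also have "\<dots> = 2 * (\<Sum>c<q. (if c \<le> m \<or> q - c \<le> m then ee q (int c) else 0)) - (\<Sum>c<q. ee q (int c))"
    by (simp add: sum_subtractf sum_distrib_left)
  also have "(\<Sum>c<q. ee q (int c)) = 0"
    using ee_geo[OF q0, of 1] ndvd by simp
  also have "(\<Sum>c<q. (if c \<le> m \<or> q - c \<le> m then ee q (int c) else 0)) = (\<Sum>c\<in>{c. c < q \<and> (c \<le> m \<or> q - c \<le> m)}. ee q (int c))"
  proof -
    have "{c. c < q \<and> (c \<le> m \<or> q - c \<le> m)} = {c \<in> {..<q}. c \<le> m \<or> q - c \<le> m}" by auto
    then show ?thesis by (simp only: sum.inter_filter[OF finite_lessThan])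
  qed
  also have "\<dots> = (\<Sum>j<N. ee q (int j - int m))"
    unfolding m_def N_def by (rule sumT[OF q])
  also have "\<dots> = ee q (- int m) * (\<Sum>j<N. z ^ j)"
    unfolding z_def ee_pow sum_distrib_left by (intro sum.cong refl) (simp add: ee_add[symmetric])
  finally have P: "Phi q = 2 * (ee q (- int m) * (\<Sum>j<N. z ^ j))" by simp
  have z1: "z \<noteq> 1" unfolding z_def using ee_eq_1[OF q0] ndvd by blast
  have gs: "(\<Sum>j<N. z ^ j) = (1 - z ^ N) / (1 - z)" using z1 by (simp add: sum_gp_strict)
  have zN: "z ^ N = cis (2 * pi * real N / real q)" unfolding z_def ee_pow by (simp add: ee_def)
  have z': "z = cis (2 * pi / real q)" unfolding z_def ee_def by simp
  have "cmod (Phi q) = 2 * (cmod (1 - z ^ N) / cmod (1 - z))"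
    unfolding P gs by (simp add: norm_mult norm_divide)
  also have "cmod (1 - z ^ N) = 2 * \<bar>sin (pi * real N / real q)\<bar>"
    unfolding zN cmod_1_minus_cis by simp
  also have "cmod (1 - z) = 2 * sin (pi / real q)"
  proof -
    have "0 < pi / real q" using q by simp
    moreover have "pi / real q < pi" using q by (simp add: divide_less_eq)
    ultimately have "sin (pi / real q) > 0" by (rule sin_gt_zero)
    then show ?thesis unfolding z' cmod_1_minus_cis by simp
  qed
  finally show ?thesis unfolding N_def m_def by simp
qed



definition dlt :: "nat \<Rightarrow> real" where
  "dlt q = 4 / pi\<^sup>2 - (2 * sin (pi * real (2 * (q div 4) + 1) / real q) / (real q * sin (pi / real q)))\<^sup>2"

lemma ratio_lim: "(\<lambda>q. real (2 * (q div 4) + 1) / real q) \<longlonglongrightarrow> 1 / 2"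
proof (rule tendsto_sandwich[where f = "\<lambda>q. 1 / 2 - 1 / (2 * real q)" and h = "\<lambda>q. 1 / 2 + 1 / real q"])
  show "\<forall>\<^sub>F q in sequentially. 1 / 2 - 1 / (2 * real q) \<le> real (2 * (q div 4) + 1) / real q"
  proof (rule eventually_sequentiallyI[of 1])
    fix q :: nat assume q: "1 \<le> q"
    have "4 * (q div 4) + 3 \<ge> q" by linarith
    then have "real q \<le> real (4 * (q div 4) + 3)" by (simp only: of_nat_le_iff)
    then have "real q - 1 \<le> 2 * real (2 * (q div 4) + 1)" by simp
    then have h: "(real q - 1) / 2 \<le> real (2 * (q div 4) + 1)" by simp
    have "1 / 2 - 1 / (2 * real q) = ((real q - 1) / 2) / real q" using q by (simp add: field_simps)
    also have "\<dots> \<le> real (2 * (q div 4) + 1) / real q" by (rule divide_right_mono[OF h]) simp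
    finally show "1 / 2 - 1 / (2 * real q) \<le> real (2 * (q div 4) + 1) / real q" .
  qed
  show "\<forall>\<^sub>F q in sequentially. real (2 * (q div 4) + 1) / real q \<le> 1 / 2 + 1 / real q"
  proof (rule eventually_sequentiallyI[of 1])
    fix q :: nat assume q: "1 \<le> q"
    have "4 * (q div 4) \<le> q" by linarith
    then have "real (4 * (q div 4)) \<le> real q" by (simp only: of_nat_le_iff)
    then have "2 * real (2 * (q div 4) + 1) \<le> real q + 2" by simp
    then have h: "real (2 * (q div 4) + 1) \<le> (real q + 2) / 2" by simp
    have "real (2 * (q div 4) + 1) / real q \<le> ((real q + 2) / 2) / real q" by (rule divide_right_mono[OF h]) simp
    also have "\<dots> = 1 / 2 + 1 / real q" using q by (simp add: field_simps)
    finally show "real (2 * (q div 4) + 1) / real q \<le> 1 / 2 + 1 / real q" .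
  qed
  show "(\<lambda>q. 1 / 2 - 1 / (2 * real q)) \<longlonglongrightarrow> 1 / 2" by real_asymp
  show "(\<lambda>q. 1 / 2 + 1 / real q) \<longlonglongrightarrow> 1 / 2" by real_asymp
qed

lemma dlt_lim: "dlt \<longlonglongrightarrow> 0"
proof -
  have s: "(\<lambda>q. sin (pi * real (2 * (q div 4) + 1) / real q)) \<longlonglongrightarrow> 1"
  proof -
    have "(\<lambda>q. pi * (real (2 * (q div 4) + 1) / real q)) \<longlonglongrightarrow> pi * (1 / 2)"
      by (intro tendsto_mult tendsto_const ratio_lim)
    then have "(\<lambda>q. sin (pi * (real (2 * (q div 4) + 1) / real q))) \<longlonglongrightarrow> sin (pi * (1 / 2))"
      by (rule tendsto_sin)
    then show ?thesis by simp
  qed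
  have g: "(\<lambda>q. real q * sin (pi / real q)) \<longlonglongrightarrow> pi" by real_asymp
  have "(\<lambda>q. 4 / pi\<^sup>2 - (2 * sin (pi * real (2 * (q div 4) + 1) / real q) / (real q * sin (pi / real q)))\<^sup>2)
      \<longlonglongrightarrow> 4 / pi\<^sup>2 - (2 * 1 / pi)\<^sup>2"
    by (intro tendsto_diff tendsto_const tendsto_power tendsto_divide tendsto_mult s g) simp
  then show ?thesis unfolding dlt_def by (simp add: power_divide)
qed



lemma Hmat_norm2: "(cmod (Hmat y False))\<^sup>2 = 1 / 2"
  unfolding Hmat_def norm_of_real by (cases y) (simp_all add: power_divide)

lemma success_bound:
  assumes q: "q \<ge> 2" and sk: "sk \<in> zq_vecs n q"
  shows "4 / pi\<^sup>2 - dlt q \<le> one_query_success n q 1 (U0m n q) (U1m n q) (\<lambda>x. fst x) sk"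
proof -
  have q0: "q > 0" using q by simp
  let ?S = "qbasis_set n q 1"
  let ?phi = "apply_op ?S (U1m n q) (dec_oracle q sk (apply_op ?S (U0m n q) (init_state n)))"
  have sub: "{(sk, 1, False, 0), (sk, 1, True, 0)} \<subseteq> {x \<in> ?S. fst x = sk}"
    using sk q unfolding qbasis_set_def by auto
  have fin: "finite {x \<in> ?S. fst x = sk}" by (simp add: qbasis_set_prod)
  have "(\<Sum>x\<in>{(sk, 1, False, 0), (sk, 1, True, 0)}. (cmod (?phi x))\<^sup>2) \<le> (\<Sum>x\<in>{x \<in> ?S. fst x = sk}. (cmod (?phi x))\<^sup>2)"
    by (rule sum_mono2[OF fin sub]) simp
  also have "\<dots> = one_query_success n q 1 (U0m n q) (U1m n q) (\<lambda>x. fst x) sk"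
    unfolding one_query_success_def Let_def by simp
  finally have le: "(cmod (?phi (sk, 1, False, 0)))\<^sup>2 + (cmod (?phi (sk, 1, True, 0)))\<^sup>2 \<le> one_query_success n q 1 (U0m n q) (U1m n q) (\<lambda>x. fst x) sk"
    by simp
  have a: "\<And>y. (cmod (?phi (sk, 1, y, 0)))\<^sup>2 = 1 / 2 * ((cmod (Phi q))\<^sup>2 / (real q)\<^sup>2)"
    unfolding amp[OF q0 sk] by (simp add: norm_mult norm_divide power_mult_distrib power_divide Hmat_norm2)
  have sp: "sin (pi / real q) > 0"
  proof -
    have "0 < pi / real q" using q by simp
    moreover have "pi / real q < pi" using q by (simp add: divide_less_eq)
    ultimately show ?thesis by (rule sin_gt_zero)
  qed
  have "4 / pi\<^sup>2 - dlt q = (cmod (Phi q))\<^sup>2 / (real q)\<^sup>2"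
    unfolding dlt_def Phi_norm[OF q] using sp q
    by (simp add: power_divide power_mult_distrib)
  with le a show ?thesis by simp
qed

theorem corollary2:
  shows "\<exists>(w :: nat \<Rightarrow> nat \<Rightarrow> nat) (U0 :: nat \<Rightarrow> nat \<Rightarrow> qop) (U1 :: nat \<Rightarrow> nat \<Rightarrow> qop)
            (out :: nat \<Rightarrow> nat \<Rightarrow> qbasis \<Rightarrow> nat list) (\<delta> :: nat \<Rightarrow> real).
     \<delta> \<longlonglongrightarrow> 0 \<and>
     (\<forall>n q. 1 \<le> n \<and> 2 \<le> q \<longrightarrow>
        0 < w n q \<and>
        unitary_on (qbasis_set n q (w n q)) (U0 n q) \<and>
        unitary_on (qbasis_set n q (w n q)) (U1 n q) \<and>
        (\<forall>sk\<in>zq_vecs n q.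
           4 / pi\<^sup>2 - \<delta> q \<le> one_query_success n q (w n q) (U0 n q) (U1 n q) (out n q) sk))"
proof (intro exI conjI allI impI)
  show "dlt \<longlonglongrightarrow> 0" by (rule dlt_lim)
  fix n q :: nat assume nq: "1 \<le> n \<and> 2 \<le> q"
  show "0 < (\<lambda>n q. 1::nat) n q" by simp
  show "unitary_on (qbasis_set n q ((\<lambda>n q. 1::nat) n q)) (U0m n q)" using nq by (intro U0_unitary) simp
  show "unitary_on (qbasis_set n q ((\<lambda>n q. 1::nat) n q)) (U1m n q)" using nq by (intro U1_unitary) simp
  show "\<forall>sk\<in>zq_vecs n q. 4 / pi\<^sup>2 - dlt q \<le> one_query_success n q ((\<lambda>n q. 1::nat) n q) (U0m n q) (U1m n q) ((\<lambda>n q x. fst x) n q) sk"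
    using nq success_bound by simp
qed


end
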